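(* Let $D_1,D_2$ be Beltrami--Vekua data (each in some $\mathcal{BV}(\Omega_i)$). If $\mathcal{M}(D_1)\neq\mathcal{M}(D_2)$, then $D_1$ and $D_2$ are not gauge-diffeomorphism equivalent, where $\mathcal{M}(D):=\int_\Omega\frac{|\mathcal{B}|^2}{1-|\mu|^2}\,dx\,dy\in[0,\infty]$ for $D=(\mu,\mathcal{A},\mathcal{B},\mathcal{F})\in\mathcal{BV}(\Omega)$.
   Context: A domain is an open connected subset of $\mathbb{C}$. $\mathcal{BV}(\Omega)$ is the set of quadruples $(\mu,\mathcal{A},\mathcal{B},\mathcal{F})$ of continuous complex functions on $\Omega$ with $|\mu|<1$ pointwise. Gauge action: for a $C^1$ nowhere-vanishing $\phi$ on $\Omega$, $\phi\cdot(\mu,\mathcal{A},\mathcal{B},\mathcal{F})=(\mu,\ \mathcal{A}-\phi_{\bar z}/\phi+\mu\phi_z/\phi,\ \mathcal{B}\phi/\bar\phi,\ \phi\mathcal{F})$. Diffeomorphism: $C^1$ bijection $\Phi:\Omega_1\to\Omega_2$ with $C^1$ inverse and $J=|\Phi_z|^2-|\Phi_{\bar z}|^2>0$; for $D\in\mathcal{BV}(\Omega_2)$, with $K=\Phi_z+(\mu\circ\Phi)\overline{\Phi_{\bar z}}$, $\Phi^*D=((\Phi_{\bar z}+(\mu\circ\Phi)\overline{\Phi_z})/K,\ J(\mathcal{A}\circ\Phi)/K,\ J(\mathcal{B}\circ\Phi)/K,\ J(\mathcal{F}\circ\Phi)/K)$. Gauge-diffeomorphism equivalence is the equivalence relation generated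 by the relations $D\sim\phi\cdot D$ (gauges) and $\Phi^*D\sim D$ (diffeomorphisms). *)

theory Defs
  imports "HOL-Analysis.Analysis"
begin

text \<open>A Beltrami--Vekua datum together with its domain:
  (Omega, mu, A, B, F). Only values on Omega matter.\<close>
type_synonym bvdatum =
  "complex set \<times> (complex \<Rightarrow> complex) \<times> (complex \<Rightarrow> complex) \<times> (complex \<Rightarrow> complex) \<times> (complex \<Rightarrow> complex)"

definition is_domain :: "complex set \<Rightarrow> bool" where
  "is_domain S \<longleftrightarrow> open S \<and> connected S \<and> S \<noteq> {}"

definition C1_on :: "complex set \<Rightarrow> (complex \<Rightarrow> complex) \<Rightarrow> bool" where
  "C1_on S f \<longleftrightarrow> (\<forall>z\<in>S. f differentiable (at z))
     \<and> continuous_on S (\<lambda>z. frechet_derivative f (at z) 1)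
     \<and> continuous_on S (\<lambda>z. frechet_derivative f (at z) \<i>)"

definition dz :: "(complex \<Rightarrow> complex) \<Rightarrow> complex \<Rightarrow> complex" where
  "dz f z = (frechet_derivative f (at z) 1 - \<i> * frechet_derivative f (at z) \<i>) / 2"

definition dzb :: "(complex \<Rightarrow> complex) \<Rightarrow> complex \<Rightarrow> complex" where
  "dzb f z = (frechet_derivative f (at z) 1 + \<i> * frechet_derivative f (at z) \<i>) / 2"

definition is_BV :: "bvdatum \<Rightarrow> bool" where
  "is_BV D \<longleftrightarrow> (case D of (\<Omega>, \<mu>, A, B, F) \<Rightarrow>
     is_domain \<Omega> \<and> continuous_on \<Omega> \<mu> \<and> continuous_on \<Omega> A \<and> continuous_on \<Omega> B
     \<and> continuous_on \<Omega> F \<and> (\<forall>z\<in>\<Omega>. cmod (\<mu> z) < 1))"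

definition gauge_act :: "(complex \<Rightarrow> complex) \<Rightarrow> bvdatum \<Rightarrow> bvdatum" where
  "gauge_act \<phi> D = (case D of (\<Omega>, \<mu>, A, B, F) \<Rightarrow>
     (\<Omega>, \<mu>,
      (\<lambda>z. A z - dzb \<phi> z / \<phi> z + \<mu> z * dz \<phi> z / \<phi> z),
      (\<lambda>z. B z * \<phi> z / cnj (\<phi> z)),
      (\<lambda>z. \<phi> z * F z)))"

definition jac :: "(complex \<Rightarrow> complex) \<Rightarrow> complex \<Rightarrow> real" where
  "jac \<Phi> z = (cmod (dz \<Phi> z))\<^sup>2 - (cmod (dzb \<Phi> z))\<^sup>2"

definition is_diffeo :: "(complex \<Rightarrow> complex) \<Rightarrow> complex set \<Rightarrow> complex set \<Rightarrow> bool" where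
  "is_diffeo \<Phi> \<Omega>1 \<Omega>2 \<longleftrightarrow> bij_betw \<Phi> \<Omega>1 \<Omega>2 \<and> C1_on \<Omega>1 \<Phi>
     \<and> C1_on \<Omega>2 (inv_into \<Omega>1 \<Phi>) \<and> (\<forall>z\<in>\<Omega>1. jac \<Phi> z > 0)"

definition pullback :: "(complex \<Rightarrow> complex) \<Rightarrow> complex set \<Rightarrow> bvdatum \<Rightarrow> bvdatum" where
  "pullback \<Phi> \<Omega>1 D = (case D of (\<Omega>2, \<mu>, A, B, F) \<Rightarrow>
     (let K = (\<lambda>z. dz \<Phi> z + \<mu> (\<Phi> z) * cnj (dzb \<Phi> z)) in
     (\<Omega>1,
      (\<lambda>z. (dzb \<Phi> z + \<mu> (\<Phi> z) * cnj (dz \<Phi> z)) / K z),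
      (\<lambda>z. of_real (jac \<Phi> z) * A (\<Phi> z) / K z),
      (\<lambda>z. of_real (jac \<Phi> z) * B (\<Phi> z) / K z),
      (\<lambda>z. of_real (jac \<Phi> z) * F (\<Phi> z) / K z))))"

text \<open>Gauge-diffeomorphism equivalence: the equivalence relation on Beltrami--Vekua data
  generated by gauges and diffeomorphism pullbacks (data being functions on their domain,
  tuples agreeing on the domain are identified).\<close>
inductive gd_equiv :: "bvdatum \<Rightarrow> bvdatum \<Rightarrow> bool" where
  ext: "is_BV (\<Omega>, \<mu>, A, B, F) \<Longrightarrow>
        (\<forall>z\<in>\<Omega>. \<mu> z = \<mu>' z \<and> A z = A' z \<and> B z = B' z \<and> F z = F' z) \<Longrightarrow>
        gd_equiv (\<Omega>, \<mu>, A, B, F) (\<Omega>, \<mu>', A', B', F')"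
| gauge: "is_BV D \<Longrightarrow> C1_on (fst D) \<phi> \<Longrightarrow> (\<forall>z\<in>fst D. \<phi> z \<noteq> 0) \<Longrightarrow>
        gd_equiv D (gauge_act \<phi> D)"
| diffeo: "is_BV D \<Longrightarrow> is_domain \<Omega>1 \<Longrightarrow> is_diffeo \<Phi> \<Omega>1 (fst D) \<Longrightarrow>
        gd_equiv (pullback \<Phi> \<Omega>1 D) D"
| sym: "gd_equiv D1 D2 \<Longrightarrow> gd_equiv D2 D1"
| trans: "gd_equiv D1 D2 \<Longrightarrow> gd_equiv D2 D3 \<Longrightarrow> gd_equiv D1 D3"

definition Mfun :: "bvdatum \<Rightarrow> ennreal" where
  "Mfun D = (case D of (\<Omega>, \<mu>, A, B, F) \<Rightarrow>
     (\<integral>\<^sup>+ z\<in>\<Omega>. ennreal ((cmod (B z))\<^sup>2 / (1 - (cmod (\<mu> z))\<^sup>2)) \<partial>lborel))"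

end

theory Submission
  imports Defs
begin

definition toR :: "complex \<Rightarrow> real^2" where "toR z = vector [Re z, Im z]"
definition toC :: "real^2 \<Rightarrow> complex" where "toC v = Complex (v$1) (v$2)"

lemma toR_nth[simp]: "toR z $ 1 = Re z" "toR z $ 2 = Im z"
  by (simp_all add: toR_def)
lemma toC_toR[simp]: "toC (toR z) = z" by (simp add: toC_def complex_eq_iff)
lemma toR_toC[simp]: "toR (toC v) = v"
  by (simp add: toC_def vec_eq_iff forall_2)
lemma Re_toC[simp]: "Re (toC v) = v$1" and Im_toC[simp]: "Im (toC v) = v$2"
  by (simp_all add: toC_def)

lemma lin_toC: "linear toC"
  by (rule linearI) (auto simp: toC_def complex_eq_iff)
lemma linear_toC: "bounded_linear toC"
  using lin_toC linear_conv_bounded_linear by blast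
lemma lin_toR: "linear toR"
  by (rule linearI) (auto simp: vec_eq_iff forall_2)
lemma linear_toR: "bounded_linear toR"
  using lin_toR linear_conv_bounded_linear by blast

lemma Basis_2: "(Basis :: (real^2) set) = {axis 1 1, axis 2 1}"
  by (auto simp: Basis_vec_def UNIV_2)
lemma axis12: "axis 1 (1::real) \<noteq> (axis 2 1 :: real^2)"
  by (simp add: axis_eq_axis)

lemma toC_meas[measurable]: "toC \<in> borel_measurable borel"
  using linear_toC by (intro borel_measurable_continuous_onI linear_continuous_on) 

lemma distr_toC: "distr lborel borel toC = (lborel :: complex measure)"
proof (rule lborel_eqI[symmetric])
  fix l u :: complex
  assume le: "\<And>b. b \<in> Basis \<Longrightarrow> l \<bullet> b \<le> u \<bullet> b"
  have "toC -` box l u = box (toR l) (toR u)"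
    by (auto simp: mem_box_cart mem_box Basis_complex_def forall_2 toC_def)
  moreover have "Re l \<le> Re u" "Im l \<le> Im u" using le[of 1] le[of \<i>] by (auto simp: Basis_complex_def)
  moreover have "emeasure lborel (box (toR l) (toR u)) = ennreal (Re u - Re l) * ennreal (Im u - Im l)"
    using \<open>Re l \<le> Re u\<close> \<open>Im l \<le> Im u\<close>
    by (subst emeasure_lborel_box) (auto simp: Basis_2 axis12 inner_axis ennreal_mult)
  ultimately show "emeasure (distr lborel borel toC) (box l u) = (\<Prod>b\<in>Basis. (u - l) \<bullet> b)"
    by (simp add: emeasure_distr Basis_complex_def Basis_2 axis12 inner_axis ennreal_mult inner_complex_def)
qed simp

lemma cov_real:
  fixes f :: "real^'m::{finite,wellorder} \<Rightarrow> real" and g :: "real^'m::_ \<Rightarrow> real^'m::_"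
  assumes S: "S \<in> sets lebesgue"
    and der_g: "\<And>x. x \<in> S \<Longrightarrow> (g has_derivative g' x) (at x within S)"
    and inj: "inj_on g S"
  shows "(\<lambda>x. \<bar>det (matrix (g' x))\<bar> * f(g x)) absolutely_integrable_on S \<and>
           integral S (\<lambda>x. \<bar>det (matrix (g' x))\<bar> * f(g x)) = b
     \<longleftrightarrow> f absolutely_integrable_on (g ` S) \<and> integral (g ` S) f = b"
proof -
  have "(\<lambda>x. \<bar>det (matrix (g' x))\<bar> *\<^sub>R vec (f(g x)) :: real ^ 1) absolutely_integrable_on S \<and>
           integral S (\<lambda>x. \<bar>det (matrix (g' x))\<bar> *\<^sub>R vec (f(g x))) = (vec b :: real ^ 1)
         \<longleftrightarrow> (\<lambda>x. vec (f x) :: real ^ 1) absolutely_integrable_on (g ` S) \<and>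
           integral (g ` S) (\<lambda>x. vec (f x)) = (vec b :: real ^ 1)"
    by (rule has_absolute_integral_change_of_variables[OF assms])
  thus ?thesis
    by (simp add: absolutely_integrable_on_1_iff integral_on_1_eq)
qed

lemma set_nn_fin_integrable:
  fixes f :: "'a::euclidean_space \<Rightarrow> real"
  assumes m: "set_borel_measurable borel A f" and f0: "\<And>x. x\<in>A \<Longrightarrow> 0 \<le> f x"
    and fin: "(\<integral>\<^sup>+x\<in>A. ennreal (f x) \<partial>lborel) < \<infinity>"
  shows "f integrable_on A"
proof -
  have eq: "(\<integral>\<^sup>+x\<in>A. ennreal (f x) \<partial>lborel) = (\<integral>\<^sup>+x. ennreal (indicator A x * f x) \<partial>lborel)"
    by (intro nn_integral_cong) (auto simp: indicator_def)
  have "(\<lambda>x. indicator A x * f x) integrable_on UNIV"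
    by (rule nn_integral_integrable_on) (use m f0 fin eq in \<open>auto simp: set_borel_measurable_def indicator_def\<close>)
  moreover have "(\<lambda>x. indicator A x * f x) = (\<lambda>x. if x \<in> A then f x else 0)"
    by (auto simp: indicator_def)
  ultimately show ?thesis using integrable_restrict_UNIV by metis
qed

lemma nn_cov:
  fixes f :: "real^'m::{finite,wellorder} \<Rightarrow> real" and g :: "real^'m::_ \<Rightarrow> real^'m::_"
  assumes S: "S \<in> sets lebesgue"
    and der_g: "\<And>x. x \<in> S \<Longrightarrow> (g has_derivative g' x) (at x within S)"
    and inj: "inj_on g S"
    and f0: "\<And>y. y \<in> g ` S \<Longrightarrow> 0 \<le> f y"
    and m1: "set_borel_measurable borel (g ` S) f"
    and m2: "set_borel_measurable borel S (\<lambda>x. \<bar>det (matrix (g' x))\<bar> * f (g x))"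
  shows "(\<integral>\<^sup>+y\<in>g ` S. ennreal (f y) \<partial>lborel)
       = (\<integral>\<^sup>+x\<in>S. ennreal (\<bar>det (matrix (g' x))\<bar> * f (g x)) \<partial>lborel)"
proof -
  let ?D = "\<lambda>x. \<bar>det (matrix (g' x))\<bar> * f (g x)"
  have D0: "\<And>x. x \<in> S \<Longrightarrow> 0 \<le> ?D x" using f0 by auto
  have cov: "\<And>b. ?D absolutely_integrable_on S \<and> integral S ?D = b
     \<longleftrightarrow> f absolutely_integrable_on (g ` S) \<and> integral (g ` S) f = b"
    by (rule cov_real[OF S der_g inj])
  show ?thesis
  proof (cases "(\<integral>\<^sup>+y\<in>g ` S. ennreal (f y) \<partial>lborel) < \<infinity>")
    case True
    then have fi: "f integrable_on g ` S" using set_nn_fin_integrable[OF m1] f0 by blast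
    then have fa: "f absolutely_integrable_on g ` S" using nonnegative_absolutely_integrable_1 f0 by blast
    with cov have Da: "?D absolutely_integrable_on S" "integral S ?D = integral (g ` S) f" by blast+
    have "(\<integral>\<^sup>+y\<in>g ` S. ennreal (f y) \<partial>lborel) = ennreal (integral (g ` S) f)"
      using fi f0 by (intro nn_integral_has_integral_lebesgue') auto
    moreover have "(\<integral>\<^sup>+x\<in>S. ennreal (?D x) \<partial>lborel) = ennreal (integral S ?D)"
      using D0 integrable_integral[OF set_lebesgue_integral_eq_integral(1)[OF Da(1)]] by (intro nn_integral_has_integral_lebesgue') auto
    ultimately show ?thesis using Da by simp
  next
    case False
    show ?thesis
    proof (cases "(\<integral>\<^sup>+x\<in>S. ennreal (?D x) \<partial>lborel) < \<infinity>")
      case True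
      then have fi: "?D integrable_on S" using set_nn_fin_integrable[OF m2] D0 by blast
      then have fa: "?D absolutely_integrable_on S" using nonnegative_absolutely_integrable_1 D0 by blast
      with cov have Da: "f absolutely_integrable_on g ` S" "integral (g ` S) f = integral S ?D" by blast+
      have "(\<integral>\<^sup>+x\<in>S. ennreal (?D x) \<partial>lborel) = ennreal (integral S ?D)"
        using fi D0 by (intro nn_integral_has_integral_lebesgue') auto
      moreover have "(\<integral>\<^sup>+y\<in>g ` S. ennreal (f y) \<partial>lborel) = ennreal (integral (g ` S) f)"
        using f0 integrable_integral[OF set_lebesgue_integral_eq_integral(1)[OF Da(1)]] by (intro nn_integral_has_integral_lebesgue') auto
      ultimately show ?thesis using Da by simp
    next
      case False2: False
      with False show ?thesis by (simp add: less_top[symmetric])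
    qed
  qed
qed


definition detC :: "(complex \<Rightarrow> complex) \<Rightarrow> real" where
  "detC L = Re (L 1) * Im (L \<i>) - Im (L 1) * Re (L \<i>)"

lemma toC_axis: "toC (axis 1 1) = 1" "toC (axis 2 1) = \<i>"
  by (simp_all add: toC_def axis_def complex_eq_iff)

lemma sbm_toC:
  assumes "set_borel_measurable borel A (h :: complex \<Rightarrow> real)"
  shows "set_borel_measurable borel (toC -` A) (\<lambda>v. h (toC v))"
proof -
  have "(\<lambda>v. indicator (toC -` A) v *\<^sub>R h (toC v)) = (\<lambda>x. indicator A x *\<^sub>R h x) \<circ> toC"
    by (auto simp: indicator_def fun_eq_iff)
  moreover have "(\<lambda>x. indicator A x *\<^sub>R h x) \<circ> toC \<in> borel_measurable borel"
    using assms unfolding set_borel_measurable_def by (intro measurable_comp[OF toC_meas]) auto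
  ultimately show ?thesis unfolding set_borel_measurable_def by simp
qed

lemma nn_toC:
  assumes "set_borel_measurable borel A (h :: complex \<Rightarrow> real)"
  shows "(\<integral>\<^sup>+z\<in>A. ennreal (h z) \<partial>lborel) = (\<integral>\<^sup>+v\<in>toC -` A. ennreal (h (toC v)) \<partial>lborel)"
proof -
  have m: "(\<lambda>z. ennreal (indicator A z *\<^sub>R h z)) \<in> borel_measurable borel"
    using assms unfolding set_borel_measurable_def by (rule measurable_compose[OF _ measurable_ennreal])
  have "(\<integral>\<^sup>+z\<in>A. ennreal (h z) \<partial>lborel) = (\<integral>\<^sup>+z. ennreal (indicator A z *\<^sub>R h z) \<partial>lborel)"
    by (intro nn_integral_cong) (auto simp: indicator_def)
  also have "\<dots> = (\<integral>\<^sup>+z. ennreal (indicator A z *\<^sub>R h z) \<partial>(distr lborel borel toC))"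
    by (simp add: distr_toC)
  also have "\<dots> = (\<integral>\<^sup>+v. ennreal (indicator A (toC v) *\<^sub>R h (toC v)) \<partial>lborel)"
    by (rule nn_integral_distr) (use m in auto)
  also have "\<dots> = (\<integral>\<^sup>+v\<in>toC -` A. ennreal (h (toC v)) \<partial>lborel)"
    by (intro nn_integral_cong) (auto simp: indicator_def)
  finally show ?thesis .
qed

lemma cov_complex:
  fixes \<Phi> :: "complex \<Rightarrow> complex" and f :: "complex \<Rightarrow> real"
  assumes \<Omega>: "open \<Omega>"
    and der: "\<And>z. z \<in> \<Omega> \<Longrightarrow> (\<Phi> has_derivative L z) (at z)"
    and inj: "inj_on \<Phi> \<Omega>"
    and f0: "\<And>w. w \<in> \<Phi> ` \<Omega> \<Longrightarrow> 0 \<le> f w"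
    and m1: "set_borel_measurable borel (\<Phi> ` \<Omega>) f"
    and m2: "set_borel_measurable borel \<Omega> (\<lambda>z. \<bar>detC (L z)\<bar> * f (\<Phi> z))"
  shows "(\<integral>\<^sup>+w\<in>\<Phi> ` \<Omega>. ennreal (f w) \<partial>lborel)
       = (\<integral>\<^sup>+z\<in>\<Omega>. ennreal (\<bar>detC (L z)\<bar> * f (\<Phi> z)) \<partial>lborel)"
proof -
  define S where "S = toC -` \<Omega>"
  define g where "g = (\<lambda>v. toR (\<Phi> (toC v)))"
  define g' where "g' = (\<lambda>v. (\<lambda>h. toR (L (toC v) (toC h))))"
  have gS: "g ` S = toC -` (\<Phi> ` \<Omega>)"
  proof
    show "g ` S \<subseteq> toC -` (\<Phi> ` \<Omega>)" by (auto simp: g_def S_def)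
    show "toC -` (\<Phi> ` \<Omega>) \<subseteq> g ` S"
    proof
      fix v assume "v \<in> toC -` (\<Phi> ` \<Omega>)"
      then obtain z where z: "z \<in> \<Omega>" "toC v = \<Phi> z" by auto
      have "v = toR (toC v)" by simp
      then have "v = g (toR z)" using z by (simp add: g_def)
      moreover have "toR z \<in> S" using z by (simp add: S_def)
      ultimately show "v \<in> g ` S" by blast
    qed
  qed
  have Sl: "S \<in> sets lebesgue"
  proof -
    have "S \<in> sets borel" unfolding S_def using measurable_sets[OF toC_meas, of \<Omega>] \<Omega> by simp
    then show ?thesis by simp
  qed
  have derg: "(g has_derivative g' v) (at v within S)" if "v \<in> S" for v
  proof -
    have d1: "(toC has_derivative toC) (at v)" using linear_toC by (rule bounded_linear_imp_has_derivative)
    have d2: "(\<Phi> has_derivative L (toC v)) (at (toC v))" using der that by (simp add: S_def)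
    have d3: "(toR has_derivative toR) (at (\<Phi> (toC v)))" using linear_toR by (rule bounded_linear_imp_has_derivative)
    have "((\<lambda>x. \<Phi> (toC x)) has_derivative (\<lambda>h. L (toC v) (toC h))) (at v)"
      by (rule has_derivative_compose[OF d1 d2])
    from has_derivative_compose[OF this d3] show ?thesis
      unfolding g_def g'_def by (rule has_derivative_at_withinI)
  qed
  have injg: "inj_on g S"
  proof (rule inj_onI)
    fix x y assume xy: "x \<in> S" "y \<in> S" "g x = g y"
    then have "toC (g x) = toC (g y)" by simp
    then have "\<Phi> (toC x) = \<Phi> (toC y)" by (simp add: g_def)
    then have "toC x = toC y" using inj xy(1,2) by (auto simp: S_def inj_on_def)
    then have "toR (toC x) = toR (toC y)" by simp
    then show "x = y" by simp
  qed
  have det: "det (matrix (g' v)) = detC (L (toC v))" for v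
    unfolding det_2 matrix_def g'_def detC_def by (simp add: toC_axis)
  have "(\<integral>\<^sup>+w\<in>\<Phi> ` \<Omega>. ennreal (f w) \<partial>lborel) = (\<integral>\<^sup>+v\<in>toC -` (\<Phi> ` \<Omega>). ennreal (f (toC v)) \<partial>lborel)"
    by (rule nn_toC[OF m1])
  also have "\<dots> = (\<integral>\<^sup>+v\<in>g ` S. ennreal (f (toC v)) \<partial>lborel)" by (simp add: gS)
  also have "\<dots> = (\<integral>\<^sup>+v\<in>S. ennreal (\<bar>det (matrix (g' v))\<bar> * f (toC (g v))) \<partial>lborel)"
  proof (rule nn_cov[OF Sl derg injg])
    show "0 \<le> f (toC y)" if "y \<in> g ` S" for y using f0 that gS by auto
    show "set_borel_measurable borel (g ` S) (\<lambda>y. f (toC y))"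
      unfolding gS by (rule sbm_toC[OF m1])
    have "set_borel_measurable borel S (\<lambda>v. \<bar>detC (L (toC v))\<bar> * f (\<Phi> (toC v)))"
      unfolding S_def by (rule sbm_toC[OF m2])
    then show "set_borel_measurable borel S (\<lambda>x. \<bar>det (matrix (g' x))\<bar> * f (toC (g x)))"
      unfolding det g_def toC_toR .
  qed
  also have "\<dots> = (\<integral>\<^sup>+v\<in>toC -` \<Omega>. ennreal (\<bar>detC (L (toC v))\<bar> * f (\<Phi> (toC v))) \<partial>lborel)"
    unfolding det g_def toC_toR S_def ..
  also have "\<dots> = (\<integral>\<^sup>+z\<in>\<Omega>. ennreal (\<bar>detC (L z)\<bar> * f (\<Phi> z)) \<partial>lborel)"
    by (rule nn_toC[OF m2, symmetric])
  finally show ?thesis .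
qed


lemma jac_aux: "(cmod ((a - \<i> * b) / 2))\<^sup>2 - (cmod ((a + \<i> * b) / 2))\<^sup>2 = Re a * Im b - Im a * Re b"
  unfolding cmod_power2 by (simp add: power2_eq_square field_simps)

lemma jac_detC: "jac \<Phi> z = detC (frechet_derivative \<Phi> (at z))"
  unfolding jac_def detC_def dz_def dzb_def by (rule jac_aux)

lemma K_identity:
  fixes a b m :: complex
  shows "(cmod (a + m * cnj b))\<^sup>2 - (cmod (b + m * cnj a))\<^sup>2 = ((cmod a)\<^sup>2 - (cmod b)\<^sup>2) * (1 - (cmod m)\<^sup>2)"
  unfolding cmod_power2 by (simp add: power2_eq_square algebra_simps)

lemma pointwise:
  fixes a b m \<beta> :: complex and J :: real
  assumes m: "cmod m < 1" and J: "J = (cmod a)\<^sup>2 - (cmod b)\<^sup>2" "J > 0"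
  shows "(cmod (of_real J * \<beta> / (a + m * cnj b)))\<^sup>2 /
           (1 - (cmod ((b + m * cnj a) / (a + m * cnj b)))\<^sup>2)
       = J * ((cmod \<beta>)\<^sup>2 / (1 - (cmod m)\<^sup>2))"
proof -
  define K where "K = a + m * cnj b"
  have ab: "cmod b < cmod a" using J by (smt (verit) norm_ge_zero power2_le_imp_le)
  have "cmod (m * cnj b) \<le> cmod b" using m by (simp add: norm_mult mult_left_le_one_le)
  then have "cmod (m * cnj b) < cmod a" using ab by linarith
  then have K0: "K \<noteq> 0" unfolding K_def
    by (metis add.commute add_diff_cancel_left' diff_0 norm_minus_cancel order_less_irrefl)
  have k2: "(cmod K)\<^sup>2 > 0" using K0 by simp
  have m2: "1 - (cmod m)\<^sup>2 > 0" proof -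
    have "(cmod m)\<^sup>2 < 1" using m by (simp add: power_less_one_iff abs_square_less_1)
    then show ?thesis by simp
  qed
  have id: "(cmod K)\<^sup>2 - (cmod (b + m * cnj a))\<^sup>2 = J * (1 - (cmod m)\<^sup>2)"
    unfolding K_def J(1) by (rule K_identity)
  have "1 - (cmod ((b + m * cnj a) / K))\<^sup>2 = ((cmod K)\<^sup>2 - (cmod (b + m * cnj a))\<^sup>2) / (cmod K)\<^sup>2"
    using k2 by (simp add: norm_divide power_divide field_simps)
  also have "\<dots> = J * (1 - (cmod m)\<^sup>2) / (cmod K)\<^sup>2" using id by simp
  finally have den: "1 - (cmod ((b + m * cnj a) / K))\<^sup>2 = J * (1 - (cmod m)\<^sup>2) / (cmod K)\<^sup>2" .
  have num: "(cmod (of_real J * \<beta> / K))\<^sup>2 = J\<^sup>2 * (cmod \<beta>)\<^sup>2 / (cmod K)\<^sup>2"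
    by (simp add: norm_divide norm_mult power_divide power_mult_distrib)
  show ?thesis
    unfolding K_def[symmetric] den num using k2 m2 J(2) K0
    by (simp add: field_simps power2_eq_square)
qed


lemma Mfun_diffeo:
  assumes BV: "is_BV D" and dom: "is_domain \<Omega>1" and dif: "is_diffeo \<Phi> \<Omega>1 (fst D)"
  shows "Mfun (pullback \<Phi> \<Omega>1 D) = Mfun D"
proof -
  obtain \<Omega>2 \<mu> A B F where D: "D = (\<Omega>2, \<mu>, A, B, F)" by (cases D)
  have o2: "open \<Omega>2" and mu1: "\<And>w. w \<in> \<Omega>2 \<Longrightarrow> cmod (\<mu> w) < 1"
    and cmu: "continuous_on \<Omega>2 \<mu>" and cB: "continuous_on \<Omega>2 B"
    using BV by (auto simp: D is_BV_def is_domain_def)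
  have o1: "open \<Omega>1" using dom by (simp add: is_domain_def)
  have bij: "bij_betw \<Phi> \<Omega>1 \<Omega>2" and C1: "C1_on \<Omega>1 \<Phi>" and J0: "\<And>z. z \<in> \<Omega>1 \<Longrightarrow> jac \<Phi> z > 0"
    using dif by (auto simp: D is_diffeo_def)
  have img: "\<Phi> ` \<Omega>1 = \<Omega>2" using bij by (simp add: bij_betw_def)
  have inj: "inj_on \<Phi> \<Omega>1" using bij by (simp add: bij_betw_def)
  define L where "L = (\<lambda>z. frechet_derivative \<Phi> (at z))"
  have der: "(\<Phi> has_derivative L z) (at z)" if "z \<in> \<Omega>1" for z
    using C1 that unfolding C1_on_def L_def by (auto simp: frechet_derivative_works)
  define h where "h = (\<lambda>w. (cmod (B w))\<^sup>2 / (1 - (cmod (\<mu> w))\<^sup>2))"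
  have den: "1 - (cmod (\<mu> w))\<^sup>2 > 0" if "w \<in> \<Omega>2" for w
  proof -
    have "(cmod (\<mu> w))\<^sup>2 < 1" using mu1[OF that] by (simp add: power_less_one_iff abs_square_less_1)
    then show ?thesis by simp
  qed
  have h0: "0 \<le> h w" if "w \<in> \<Omega>2" for w using den[OF that] by (simp add: h_def)
  have ch: "continuous_on \<Omega>2 h" unfolding h_def
    using den by (intro continuous_intros cmu cB) force
  have cPhi: "continuous_on \<Omega>1 \<Phi>"
    using der by (meson continuous_at_imp_continuous_on has_derivative_continuous)
  have cL1: "continuous_on \<Omega>1 (\<lambda>z. L z 1)" and cLi: "continuous_on \<Omega>1 (\<lambda>z. L z \<i>)"
    using C1 unfolding C1_on_def L_def by auto
  have cdet: "continuous_on \<Omega>1 (\<lambda>z. detC (L z))" unfolding detC_def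
    by (intro continuous_intros cL1 cLi)
  have chPhi: "continuous_on \<Omega>1 (\<lambda>z. h (\<Phi> z))"
    by (rule continuous_on_compose2[OF ch cPhi]) (use img in auto)
  have m1: "set_borel_measurable borel (\<Phi> ` \<Omega>1) h"
    unfolding img set_borel_measurable_def using o2 ch
    by (intro borel_measurable_continuous_on_indicator) auto
  have m2: "set_borel_measurable borel \<Omega>1 (\<lambda>z. \<bar>detC (L z)\<bar> * h (\<Phi> z))"
    unfolding set_borel_measurable_def using o1
    by (intro borel_measurable_continuous_on_indicator continuous_intros cdet chPhi) auto
  have cov: "(\<integral>\<^sup>+w\<in>\<Phi> ` \<Omega>1. ennreal (h w) \<partial>lborel)
       = (\<integral>\<^sup>+z\<in>\<Omega>1. ennreal (\<bar>detC (L z)\<bar> * h (\<Phi> z)) \<partial>lborel)"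
    by (rule cov_complex[OF o1 der inj _ m1 m2]) (use h0 img in auto)
  have pw: "(cmod (of_real (jac \<Phi> z) * B (\<Phi> z) / (dz \<Phi> z + \<mu> (\<Phi> z) * cnj (dzb \<Phi> z))))\<^sup>2 /
           (1 - (cmod ((dzb \<Phi> z + \<mu> (\<Phi> z) * cnj (dz \<Phi> z)) / (dz \<Phi> z + \<mu> (\<Phi> z) * cnj (dzb \<Phi> z))))\<^sup>2)
        = \<bar>detC (L z)\<bar> * h (\<Phi> z)" if z: "z \<in> \<Omega>1" for z
  proof -
    have "\<Phi> z \<in> \<Omega>2" using img z by auto
    then have "(cmod (of_real (jac \<Phi> z) * B (\<Phi> z) / (dz \<Phi> z + \<mu> (\<Phi> z) * cnj (dzb \<Phi> z))))\<^sup>2 /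
           (1 - (cmod ((dzb \<Phi> z + \<mu> (\<Phi> z) * cnj (dz \<Phi> z)) / (dz \<Phi> z + \<mu> (\<Phi> z) * cnj (dzb \<Phi> z))))\<^sup>2)
        = jac \<Phi> z * h (\<Phi> z)"
      unfolding h_def by (rule pointwise[OF mu1 jac_def J0[OF z]])
    moreover have "jac \<Phi> z = \<bar>detC (L z)\<bar>" using J0[OF z] by (simp add: jac_detC L_def)
    ultimately show ?thesis by simp
  qed
  have "Mfun (pullback \<Phi> \<Omega>1 D) = (\<integral>\<^sup>+z\<in>\<Omega>1. ennreal (\<bar>detC (L z)\<bar> * h (\<Phi> z)) \<partial>lborel)"
    unfolding Mfun_def pullback_def D Let_def
    by (simp, intro nn_integral_cong) (auto simp: indicator_def pw)
  also have "\<dots> = (\<integral>\<^sup>+w\<in>\<Omega>2. ennreal (h w) \<partial>lborel)" using cov img by simp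
  also have "\<dots> = Mfun D" unfolding Mfun_def D h_def by simp
  finally show ?thesis .
qed

lemma Mfun_gauge:
  assumes "\<forall>z\<in>fst D. \<phi> z \<noteq> 0"
  shows "Mfun D = Mfun (gauge_act \<phi> D)"
proof -
  obtain \<Omega> \<mu> A B F where D: "D = (\<Omega>, \<mu>, A, B, F)" by (cases D)
  have "cmod (B z * \<phi> z / cnj (\<phi> z)) = cmod (B z)" if "z \<in> \<Omega>" for z
    using assms that D by (simp add: norm_mult norm_divide)
  then show ?thesis unfolding Mfun_def gauge_act_def D
    by (simp, intro nn_integral_cong) (auto simp: indicator_def)
qed

lemma Mfun_inv: "gd_equiv D1 D2 \<Longrightarrow> Mfun D1 = Mfun D2"
proof (induction rule: gd_equiv.induct)
  case (ext \<Omega> \<mu> A B F \<mu>' A' B' F')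
  then show ?case unfolding Mfun_def
    by (simp, intro nn_integral_cong) (auto simp: indicator_def)
next
  case (gauge D \<phi>)
  then show ?case by (intro Mfun_gauge) auto
next
  case (diffeo D \<Omega>1 \<Phi>)
  then show ?case by (rule Mfun_diffeo)
qed auto

theorem corollary9p5:
  assumes "is_BV D1" and "is_BV D2" and "Mfun D1 \<noteq> Mfun D2"
  shows "\<not> gd_equiv D1 D2"
  using Mfun_inv assms(3) by blast

end
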